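(* Let $\bullet\in\{0,L_p,L,1_p,1\}$, $\mathbf{x}_0\in\mathbb{R}^d$ and $\mathbf{A}\in C^\bullet_{\mathbf{x}_0}(\mathbb{R}^d,\mathbb{R}^{m\times n})$. Then the pointwise Moore–Penrose pseudoinverse $\mathbf{A}^+:\mathbb{R}^d\to\mathbb{R}^{n\times m}$, $\mathbf{x}\mapsto \mathbf{A}(\mathbf{x})^+$, belongs to $C^\bullet_{\mathbf{x}_0}$ if and only if $\lim_{\mathbf{x}\to\mathbf{x}_0}\mathrm{rank}(\mathbf{A}(\mathbf{x}))=\mathrm{rank}(\mathbf{A}(\mathbf{x}_0))$ (i.e. the rank of $\mathbf{A}$ is constant on a neighborhood of $\mathbf{x}_0$).
   Context: Regularity classes: for finite-dimensional normed spaces $X,Y$, $D\subset X$, $f:D\to Y$, $x_0\in D$, write $f\in C^\bullet_{x_0}$ if, respectively, ($\bullet=0$) $f$ is continuous at $x_0$; ($L_p$) $f$ is pointwise Lipschitz at $x_0$, i.e. there are $r>0,L\ge 0$ with $x_0+rB_X\subset D$ and $\|f(x)-f(x_0)\|\le L\|x-x_0\|$ for $x\in x_0+rB_X$; ($L$) $f$ is Lipschitz on a neighborhood of $x_0$; ($1_p$) $f$ is Fréchet differentiable at $x_0$; ($1$) $f$ is differentiable on a neighborhood of $x_0$ and its derivative is continuous at $x_0$. $B_X$ is the closed unit ball. Matrices carry the spectral norm. *)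

theory Defs
  imports "HOL-Analysis.Analysis"
begin

definition pinv :: "real^'n^'m \<Rightarrow> real^'m^'n" where
  "pinv A = (THE B. A ** B ** A = A \<and> B ** A ** B = B \<and>
                    transpose (A ** B) = A ** B \<and> transpose (B ** A) = B ** A)"

datatype regclass = Reg0 | RegLp | RegL | Reg1p | Reg1

definition ptwise_lipschitz_at :: "('a::real_normed_vector \<Rightarrow> 'b::real_normed_vector) \<Rightarrow> 'a \<Rightarrow> bool" where
  "ptwise_lipschitz_at f x0 \<longleftrightarrow>
     (\<exists>r>0. \<exists>L\<ge>0. \<forall>x\<in>cball x0 r. norm (f x - f x0) \<le> L * norm (x - x0))"

definition locally_lipschitz_at :: "('a::real_normed_vector \<Rightarrow> 'b::real_normed_vector) \<Rightarrow> 'a \<Rightarrow> bool" where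
  "locally_lipschitz_at f x0 \<longleftrightarrow> (\<exists>r>0. \<exists>L. L-lipschitz_on (ball x0 r) f)"

definition C1_at :: "('a::real_normed_vector \<Rightarrow> 'b::real_normed_vector) \<Rightarrow> 'a \<Rightarrow> bool" where
  "C1_at f x0 \<longleftrightarrow> (\<exists>r>0. \<exists>f' :: 'a \<Rightarrow> ('a \<Rightarrow>\<^sub>L 'b).
      (\<forall>x\<in>ball x0 r. (f has_derivative blinfun_apply (f' x)) (at x)) \<and> isCont f' x0)"

fun regular_at :: "regclass \<Rightarrow> ('a::real_normed_vector \<Rightarrow> 'b::real_normed_vector) \<Rightarrow> 'a \<Rightarrow> bool" where
  "regular_at Reg0 f x0 = isCont f x0"
| "regular_at RegLp f x0 = ptwise_lipschitz_at f x0"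
| "regular_at RegL f x0 = locally_lipschitz_at f x0"
| "regular_at Reg1p f x0 = (f differentiable (at x0))"
| "regular_at Reg1 f x0 = C1_at f x0"

end

theory Submission
  imports Defs
begin

type_synonym ('n,'m) mat = "real^'n^'m"

lemma norm_sq_matrix: "norm (A::real^'n^'m) ^ 2 = (\<Sum>i\<in>UNIV. \<Sum>j\<in>UNIV. (A$i$j)^2)"
  unfolding power2_norm_eq_inner inner_vec_def by (simp add: power2_eq_square)

lemma norm_transpose: "norm (transpose (A::real^'n^'m)) = norm A"
proof -
  have "norm (transpose A) ^ 2 = norm A ^ 2"
    unfolding norm_sq_matrix transpose_def by (simp, rule sum.swap)
  then show ?thesis by (simp add: power2_eq_iff_nonneg)
qed

lemma norm_mm: "norm ((A::real^'n^'m) ** (B::real^'p^'n)) \<le> norm A * norm B"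
proof -
  have e: "(A ** B)$i$k = inner (A$i) (transpose B $ k)" for i k
    by (simp add: matrix_matrix_mult_def transpose_def inner_vec_def)
  have "norm (A ** B) ^ 2 = (\<Sum>i\<in>UNIV. \<Sum>k\<in>UNIV. (inner (A$i) (transpose B $ k))^2)"
    unfolding norm_sq_matrix e ..
  also have "\<dots> \<le> (\<Sum>i\<in>UNIV. \<Sum>k\<in>UNIV. norm (A$i)^2 * norm (transpose B $ k)^2)"
    apply (intro sum_mono)
    by (metis Cauchy_Schwarz_ineq power2_norm_eq_inner)
  also have "\<dots> = (\<Sum>i\<in>UNIV. norm (A$i)^2) * (\<Sum>k\<in>UNIV. norm (transpose B $ k)^2)"
    by (simp add: sum_product)
  also have "\<dots> = norm A ^ 2 * norm (transpose B) ^ 2"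
    by (simp add: power2_norm_eq_inner inner_vec_def)
  also have "\<dots> = (norm A * norm B)^2" by (simp add: norm_transpose power_mult_distrib)
  finally show ?thesis by (meson norm_ge_zero power2_le_imp_le mult_nonneg_nonneg)
qed

lemma mm_add_rdistrib: "((A::real^'n^'m) + B) ** (C::real^'p^'n) = A ** C + B ** C"
  by (vector matrix_matrix_mult_def sum.distrib[symmetric] field_simps)
lemma mm_diff_rdistrib: "((A::real^'n^'m) - B) ** (C::real^'p^'n) = A ** C - B ** C"
  by (vector matrix_matrix_mult_def sum_subtractf[symmetric] field_simps)
lemma mm_diff_ldistrib: "(A::real^'n^'m) ** ((B::real^'p^'n) - C) = A ** B - A ** C"
  by (vector matrix_matrix_mult_def sum_subtractf[symmetric] field_simps)
lemma transpose_add: "transpose ((A::real^'n^'m) + B) = transpose A + transpose B"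
  by (vector transpose_def)
lemma transpose_diff: "transpose ((A::real^'n^'m) - B) = transpose A - transpose B"
  by (vector transpose_def)
lemma transpose_minus: "transpose (- (A::real^'n^'m)) = - transpose A"
  by (vector transpose_def)
lemma mm_minus_left: "(- (A::real^'n^'m)) ** (C::real^'p^'n) = - (A ** C)"
  by (vector matrix_matrix_mult_def sum_negf[symmetric])
lemma mm_minus_right: "(A::real^'n^'m) ** (- (C::real^'p^'n)) = - (A ** C)"
  by (vector matrix_matrix_mult_def sum_negf[symmetric])

lemma bb_mm: "bounded_bilinear ((**) :: real^'n^'m \<Rightarrow> real^'p^'n \<Rightarrow> real^'p^'m)"
proof (rule bounded_bilinear.intro)
  show "\<exists>K. \<forall>a b. norm (a ** b :: real^'p^'m) \<le> norm a * norm b * K"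
    by (rule exI[of _ 1]) (simp add: norm_mm)
qed (auto simp: mm_add_rdistrib matrix_add_ldistrib scalar_matrix_assoc matrix_scalar_ac)

lemma bl_transpose: "bounded_linear (transpose :: real^'n^'m \<Rightarrow> real^'m^'n)"
  by (rule bounded_linear_intro[of _ 1]) (auto simp: transpose_add transpose_scalar norm_transpose)


definition penrose :: "real^'n^'m \<Rightarrow> real^'m^'n \<Rightarrow> bool" where
  "penrose A X \<longleftrightarrow> A ** X ** A = A \<and> X ** A ** X = X \<and>
                    transpose (A ** X) = A ** X \<and> transpose (X ** A) = X ** A"

lemma penrose_unique:
  assumes "penrose A X" "penrose A Y" shows "X = Y"
proof -
  have 1: "A ** X ** A = A" "X ** A ** X = X" "transpose (A ** X) = A ** X" "transpose (X ** A) = X ** A"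
    and 2: "A ** Y ** A = A" "Y ** A ** Y = Y" "transpose (A ** Y) = A ** Y" "transpose (Y ** A) = Y ** A"
    using assms unfolding penrose_def by auto
  have AX: "A ** X = A ** Y"
  proof -
    have "A ** X = (A ** Y) ** (A ** X)" using 2(1) by (metis matrix_mul_assoc)
    also have "\<dots> = transpose (A ** Y) ** transpose (A ** X)" using 1 2 by simp
    also have "\<dots> = transpose (A ** X ** A ** Y)" by (simp add: matrix_transpose_mul matrix_mul_assoc)
    also have "\<dots> = transpose (A ** Y)" using 1 by (simp add: matrix_mul_assoc)
    finally show ?thesis using 2 by simp
  qed
  have XA: "X ** A = Y ** A"
  proof -
    have "X ** A = (X ** A) ** (Y ** A)" using 2(1) by (metis matrix_mul_assoc)
    also have "\<dots> = transpose (X ** A) ** transpose (Y ** A)" using 1 2 by simp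
    also have "\<dots> = transpose (Y ** A ** X ** A)" by (simp add: matrix_transpose_mul matrix_mul_assoc)
    also have "\<dots> = transpose (Y ** A)" using 1 by (metis matrix_mul_assoc)
    finally show ?thesis using 2 by simp
  qed
  have "X = X ** (A ** X)" using 1 by (simp add: matrix_mul_assoc)
  also have "\<dots> = (X ** A) ** Y" using AX by (simp add: matrix_mul_assoc)
  also have "\<dots> = Y" using XA 2 by simp
  finally show ?thesis .
qed

lemma inner_transpose: "inner (transpose M *v x) y = inner x ((M::real^'n^'m) *v y)"
  by (simp add: dot_lmul_matrix)

lemma sym_from_inner:
  assumes "\<And>x y. inner x ((M::real^'n^'n) *v y) = inner (M *v x) y"
  shows "transpose M = M"
proof -
  have "M$j$i = M$i$j" for i j
  proof -
    have "M$j$i = inner (M *v axis i 1) (axis j 1)"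
      by (simp add: matrix_vector_mult_basis column_def cart_eq_inner_axis[symmetric])
    also have "\<dots> = inner (axis i 1) (M *v axis j 1)" using assms by simp
    also have "\<dots> = M$i$j"
      by (simp add: matrix_vector_mult_basis column_def inner_commute[of "axis i 1"] cart_eq_inner_axis[symmetric])
    finally show ?thesis .
  qed
  then show ?thesis by (simp add: transpose_def vec_eq_iff)
qed

lemma subspace_range_mv: "subspace (range (\<lambda>y. (M::real^'n^'m) *v y))"
  unfolding subspace_def
proof (intro conjI ballI allI)
  show "0 \<in> range (\<lambda>y. M *v y)" by (metis rangeI matrix_vector_mult_0_right)
next
  fix x y assume "x \<in> range (\<lambda>y. M *v y)" "y \<in> range (\<lambda>y. M *v y)"
  then obtain a b where "x = M *v a" "y = M *v b" by blast
  then have "x + y = M *v (a + b)" by (simp add: matrix_vector_right_distrib)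
  then show "x + y \<in> range (\<lambda>y. M *v y)" by blast
next
  fix c x assume "x \<in> range (\<lambda>y. M *v y)"
  then obtain a where "x = M *v a" by blast
  then have "c *\<^sub>R x = M *v (c *\<^sub>R a)" by (simp add: matrix_vector_mult_scaleR)
  then show "c *\<^sub>R x \<in> range (\<lambda>y. M *v y)" by blast
qed

lemma decomp:
  fixes M :: "real^'n^'m"
  obtains v z where "v \<in> range (\<lambda>y. transpose M *v y)" "M *v z = 0" "x = v + z"
proof -
  let ?V = "range (\<lambda>y. transpose M *v y)"
  have sV: "subspace ?V"
    by (rule subspace_range_mv)
  obtain v z where v: "v \<in> span ?V" and z: "\<And>w. w \<in> span ?V \<Longrightarrow> orthogonal z w" and x: "x = v + z"
    by (rule orthogonal_subspace_decomp_exists[of ?V x]) blast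
  have "transpose M *v (M *v z) \<in> span ?V" by (simp add: span_base)
  then have "inner z (transpose M *v (M *v z)) = 0" using z by (simp add: orthogonal_def)
  then have "inner (M *v z) (M *v z) = 0"
    by (metis inner_commute inner_transpose)
  then have "M *v z = 0" by simp
  moreover have "v \<in> ?V" using v sV by (metis span_eq_iff)
  ultimately show ?thesis using x that by blast
qed


declare transpose_matrix_vector[simp del]

lemma inner_ker: "(M::real^'n^'m) *v z = 0 \<Longrightarrow> inner z (transpose M *v w) = 0"
  by (metis inner_commute inner_transpose inner_zero_right)

lemma penrose_exists: "\<exists>X. penrose (A::real^'n^'m) X"
proof -
  let ?V = "range (\<lambda>y. transpose A *v y)"
  let ?T = "\<lambda>v. transpose A *v (A *v v)"
  have linT: "linear ?T" by (simp add: matrix_vector_mul_assoc matrix_mul_assoc)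
  have injT: "inj_on ?T ?V"
  proof (rule linear_inj_on_iff_eq_0[THEN iffD2, OF linT subspace_range_mv], intro ballI impI)
    fix v assume "v \<in> ?V" "?T v = 0"
    then obtain w where w: "v = transpose A *v w" by blast
    have "inner (A *v v) (A *v v) = inner v (?T v)" by (metis inner_commute inner_transpose)
    then have Av: "A *v v = 0" using \<open>?T v = 0\<close> by simp
    have "inner v v = inner w (A *v v)" using w by (metis inner_transpose)
    then show "v = 0" using Av by simp
  qed
  obtain t where t: "t ` UNIV \<subseteq> ?V" "linear t" "\<forall>v\<in>?V. t (?T v) = v"
    using linear_exists_left_inverse_on[OF linT subspace_range_mv injT] by blast
  define X where "X = matrix (\<lambda>y. t (transpose A *v y))"
  have linX: "linear (\<lambda>y. t (transpose A *v y))"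
    using linear_compose[OF matrix_vector_mul_linear[of "transpose A"] t(2)] unfolding o_def .
  have Xv: "X *v y = t (transpose A *v y)" for y
    unfolding X_def using matrix_vector_mul(2)[OF linX] by metis
  have tV: "t y \<in> ?V" for y using t(1) by blast
  have proj: "t (transpose A *v (A *v x)) = v" if "v \<in> ?V" "A *v z = 0" "x = v + z" for x v z
  proof -
    have "A *v x = A *v v" using that by (simp add: matrix_vector_right_distrib)
    then show ?thesis using t(3) that(1) by (metis (no_types, lifting))
  qed
  have P1: "A ** X ** A = A"
  proof (subst matrix_eq, intro allI)
    fix x
    obtain v z where vz: "v \<in> ?V" "A *v z = 0" "x = v + z" by (rule decomp)
    have "(A ** X ** A) *v x = A *v (X *v (A *v x))" by (simp add: matrix_vector_mul_assoc matrix_mul_assoc)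
    also have "\<dots> = A *v v" using proj[OF vz] by (simp add: Xv)
    also have "\<dots> = A *v x" using vz by (simp add: matrix_vector_right_distrib)
    finally show "(A ** X ** A) *v x = A *v x" .
  qed
  have P2: "X ** A ** X = X"
  proof (subst matrix_eq, intro allI)
    fix y
    have "(X ** A ** X) *v y = t (?T (t (transpose A *v y)))"
      by (simp add: matrix_vector_mul_assoc[symmetric] Xv)
    also have "\<dots> = X *v y" using bspec[OF t(3) tV[of "transpose A *v y"]] by (simp add: Xv)
    finally show "(X ** A ** X) *v y = X *v y" .
  qed
  have P4: "transpose (X ** A) = X ** A"
  proof (rule sym_from_inner)
    fix x y
    obtain v z where vz: "v \<in> ?V" "A *v z = 0" "x = v + z" by (rule decomp)
    obtain v' z' where vz': "v' \<in> ?V" "A *v z' = 0" "y = v' + z'" by (rule decomp)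
    have Mx: "(X ** A) *v x = v" using proj[OF vz] by (simp add: matrix_vector_mul_assoc[symmetric] Xv)
    have My: "(X ** A) *v y = v'" using proj[OF vz'] by (simp add: matrix_vector_mul_assoc[symmetric] Xv)
    have "inner z v' = 0" using vz' vz inner_ker by blast
    moreover have "inner v z' = 0"
    proof -
      obtain w where "v = transpose A *v w" using vz(1) by blast
      then show ?thesis using inner_ker[OF vz'(2)] by (simp add: inner_commute)
    qed
    ultimately show "inner x ((X ** A) *v y) = inner ((X ** A) *v x) y"
      using Mx My vz vz' by (simp add: inner_add_left inner_add_right)
  qed
  have projA: "(A ** X) *v y = u1" if uu: "u1 \<in> range (\<lambda>w. A *v w)" "transpose A *v u2 = 0" "y = u1 + u2" for y u1 u2
  proof -
    obtain w where w: "u1 = A *v w" using uu(1) by blast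
    obtain v z where vz: "v \<in> ?V" "A *v z = 0" "w = v + z" by (rule decomp)
    have "transpose A *v y = transpose A *v u1" using uu by (simp add: matrix_vector_right_distrib)
    then have "X *v y = v" using proj[OF vz] w by (simp add: Xv)
    then have "(A ** X) *v y = A *v v" by (simp add: matrix_vector_mul_assoc[symmetric])
    also have "\<dots> = u1" using w vz by (simp add: matrix_vector_right_distrib)
    finally show ?thesis .
  qed
  have P3: "transpose (A ** X) = A ** X"
  proof (rule sym_from_inner)
    fix x y
    obtain u1 u2 where u: "u1 \<in> range (\<lambda>w. transpose (transpose A) *v w)" "transpose A *v u2 = 0" "x = u1 + u2"
      by (rule decomp)
    obtain u1' u2' where u': "u1' \<in> range (\<lambda>w. transpose (transpose A) *v w)" "transpose A *v u2' = 0" "y = u1' + u2'"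
      by (rule decomp)
    have Mx: "(A ** X) *v x = u1" using projA u by simp
    have My: "(A ** X) *v y = u1'" using projA u' by simp
    have "inner u2 u1' = 0" using u u' inner_ker by blast
    moreover have "inner u1 u2' = 0"
    proof -
      obtain w where "u1 = transpose (transpose A) *v w" using u(1) by blast
      then show ?thesis using inner_ker[OF u'(2)] by (simp add: inner_commute)
    qed
    ultimately show "inner x ((A ** X) *v y) = inner ((A ** X) *v x) y"
      using Mx My u u' by (simp add: inner_add_left inner_add_right)
  qed
  show ?thesis using P1 P2 P3 P4 unfolding penrose_def by blast
qed

lemma pinv_penrose: "penrose A (pinv A)"
proof -
  obtain X where X: "penrose A X" using penrose_exists by blast
  have "\<exists>!X. penrose A X" using X penrose_unique by blast
  then have "penrose A (THE X. penrose A X)" by (rule theI')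
  then show ?thesis unfolding pinv_def penrose_def[symmetric] .
qed

lemma pinv_eqI: "penrose A X \<Longrightarrow> pinv A = X"
  using pinv_penrose penrose_unique by blast

lemma pinv1: "A ** pinv A ** A = A" and pinv2: "pinv A ** A ** pinv A = pinv A"
  and pinv3: "transpose (A ** pinv A) = A ** pinv A" and pinv4: "transpose (pinv A ** A) = pinv A ** A"
  using pinv_penrose[of A] unfolding penrose_def by auto


lemma mm_scaleR_left[simp]: "(c *\<^sub>R (A::real^'n^'m)) ** (B::real^'p^'n) = c *\<^sub>R (A ** B)"
  by (simp add: scalar_matrix_assoc)
lemma mm_scaleR_right[simp]: "(A::real^'n^'m) ** (c *\<^sub>R (B::real^'p^'n)) = c *\<^sub>R (A ** B)"
  by (metis matrix_scalar_ac scalar_matrix_assoc)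

lemma rank_AX: "rank (A ** pinv A) = rank A"
  by (metis le_antisym pinv1 rank_mul_le_left)

lemma rank_XA: "rank (pinv A ** A) = rank A"
  by (metis le_antisym pinv1 rank_mul_le_right matrix_mul_assoc)

lemma norm_mv: "norm ((M::real^'n^'m) *v x) \<le> norm M * norm x"
proof -
  have "norm (M *v x) ^ 2 = (\<Sum>i\<in>UNIV. (inner (M$i) x)^2)"
    unfolding power2_norm_eq_inner inner_vec_def[of "M *v x" "M *v x"] matrix_vector_mul_component
    by (simp add: power2_eq_square)
  also have "\<dots> \<le> (\<Sum>i\<in>UNIV. norm (M$i)^2 * norm x^2)"
    apply (intro sum_mono)
    by (metis Cauchy_Schwarz_ineq power2_norm_eq_inner)
  also have "\<dots> = norm M ^ 2 * norm x ^ 2"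
    by (simp add: power2_norm_eq_inner inner_vec_def sum_distrib_right)
  also have "\<dots> = (norm M * norm x)^2" by (simp add: power_mult_distrib)
  finally show ?thesis by (meson norm_ge_zero power2_le_imp_le mult_nonneg_nonneg)
qed

lemma rank_le_close_idem:
  fixes P Q :: "real^'n^'n"
  assumes P: "P ** P = P" and d: "norm (P - Q) < 1"
  shows "rank P \<le> rank Q"
proof -
  let ?R = "range (\<lambda>x. P *v x)"
  have fx: "P *v v = v" if "v \<in> ?R" for v
    using that P by (auto simp: matrix_vector_mul_assoc)
  have inj: "inj_on (\<lambda>x. Q *v x) (span ?R)"
    unfolding span_eq_iff[THEN iffD2, OF subspace_range_mv]
  proof (rule linear_inj_on_iff_eq_0[THEN iffD2, OF matrix_vector_mul_linear subspace_range_mv], intro ballI impI)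
    fix v assume v: "v \<in> ?R" "Q *v v = 0"
    have "norm v = norm ((P - Q) *v v)" using fx[OF v(1)] v(2) by (simp add: matrix_vector_mult_diff_rdistrib)
    also have "\<dots> \<le> norm (P - Q) * norm v" by (rule norm_mv)
    finally have "norm v \<le> norm (P - Q) * norm v" .
    then have "(1 - norm (P - Q)) * norm v \<le> 0" by (simp add: algebra_simps)
    then have "norm v \<le> 0" using d by (simp add: mult_le_0_iff)
    then show "v = 0" by simp
  qed
  have "rank P = dim ?R" by (rule rank_dim_range)
  also have "\<dots> = dim ((\<lambda>x. Q *v x) ` ?R)"
    by (rule dim_image_eq[OF matrix_vector_mul_linear inj, symmetric])
  also have "\<dots> \<le> dim (range (\<lambda>x. Q *v x))" by (rule dim_subset) auto
  also have "\<dots> = rank Q" by (rule rank_dim_range[symmetric])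
  finally show ?thesis .
qed

lemma rank_eq_close_idem:
  fixes P Q :: "real^'n^'n"
  assumes "P ** P = P" "Q ** Q = Q" "norm (P - Q) < 1"
  shows "rank P = rank Q"
  using rank_le_close_idem[OF assms(1,3)] rank_le_close_idem[OF assms(2), of P] assms(3)
  by (simp add: norm_minus_commute)

lemma sym_idem_entry:
  fixes P :: "real^'n^'n"
  assumes S: "transpose P = P" and I: "P ** P = P"
  shows "\<bar>P$i$j\<bar> \<le> 1"
proof -
  have d: "P$k$k = (\<Sum>l\<in>UNIV. (P$k$l)^2)" for k
  proof -
    have "P$k$k = (P ** P)$k$k" using I by simp
    also have "\<dots> = (\<Sum>l\<in>UNIV. P$k$l * P$l$k)" by (simp add: matrix_matrix_mult_def)
    also have "\<dots> = (\<Sum>l\<in>UNIV. (P$k$l)^2)"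
      using S by (auto simp: transpose_def vec_eq_iff power2_eq_square intro!: sum.cong)
    finally show ?thesis .
  qed
  have le: "(P$k$l)^2 \<le> P$k$k" for k l
    unfolding d[of k] by (rule member_le_sum) auto
  have "(P$i$i)^2 \<le> P$i$i" by (rule le)
  then have "P$i$i \<le> 1"
  proof (rule contrapos_pp)
    assume "\<not> P$i$i \<le> 1"
    then have g: "1 < P$i$i" by simp
    have "P$i$i * 1 < P$i$i * P$i$i" by (rule mult_strict_left_mono) (use g in auto)
    then show "\<not> (P$i$i)^2 \<le> P$i$i" by (simp add: power2_eq_square)
  qed
  then have "(P$i$j)^2 \<le> 1" using le[of i j] by simp
  then show ?thesis by (simp add: abs_square_le_1)
qed

lemma sym_idem_norm:
  fixes P :: "real^'n^'n"
  assumes "transpose P = P" "P ** P = P"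
  shows "norm P \<le> real (CARD('n) * CARD('n))"
proof -
  have "norm P \<le> (\<Sum>i\<in>UNIV. norm (P$i))" unfolding norm_vec_def[of P] by (rule L2_set_le_sum) simp
  also have "\<dots> \<le> (\<Sum>i\<in>(UNIV::'n set). (\<Sum>j\<in>(UNIV::'n set). 1))"
    apply (rule sum_mono)
    apply (rule order_trans[OF norm_le_l1_cart])
    apply (rule sum_mono)
    using sym_idem_entry[OF assms] by simp
  also have "\<dots> = real (CARD('n) * CARD('n))" by simp
  finally show ?thesis .
qed


lemma proj_range_eq:
  fixes P :: "real^'m^'m" and A :: "real^'n^'m"
  assumes PA: "P ** A = A" and r: "rank P = rank A"
  shows "P = A ** (pinv A ** P)"
proof -
  have sub: "range (\<lambda>x. A *v x) \<subseteq> range (\<lambda>x. P *v x)"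
  proof
    fix y assume "y \<in> range (\<lambda>x. A *v x)"
    then obtain x where "y = A *v x" by blast
    then have "y = P *v (A *v x)" using PA by (simp add: matrix_vector_mul_assoc)
    then show "y \<in> range (\<lambda>x. P *v x)" by blast
  qed
  have eq: "range (\<lambda>x. A *v x) = range (\<lambda>x. P *v x)"
    by (rule subspace_dim_equal[OF subspace_range_mv subspace_range_mv sub])
       (metis r rank_dim_range order_refl)
  show ?thesis
  proof (subst matrix_eq, intro allI)
    fix y
    have "P *v y \<in> range (\<lambda>x. A *v x)" using eq by blast
    then obtain w where w: "P *v y = A *v w" by blast
    have "(A ** (pinv A ** P)) *v y = (A ** pinv A ** A) *v w"
      by (simp add: matrix_vector_mul_assoc[symmetric] w)
    also have "\<dots> = P *v y" by (simp add: pinv1 w)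
    finally show "P *v y = (A ** (pinv A ** P)) *v y" by simp
  qed
qed

lemma tendsto_mm: "(f \<longlongrightarrow> a) F \<Longrightarrow> (g \<longlongrightarrow> b) F \<Longrightarrow> ((\<lambda>x. (f x :: real^'n^'m) ** (g x :: real^'p^'n)) \<longlongrightarrow> a ** b) F"
  by (rule bounded_bilinear.tendsto[OF bb_mm])

lemma tendsto_transpose: "(f \<longlongrightarrow> a) F \<Longrightarrow> ((\<lambda>x. transpose (f x :: real^'n^'m)) \<longlongrightarrow> transpose a) F"
  by (rule bounded_linear.tendsto[OF bl_transpose])

lemma pinv_bounded_near:
  fixes A :: "real^'n^'m"
  shows "\<exists>\<delta>>0. \<exists>M. \<forall>B. norm (B - A) < \<delta> \<longrightarrow> rank B = rank A \<longrightarrow> norm (pinv B) \<le> M"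
proof (rule ccontr)
  assume H: "\<not> ?thesis"
  have "\<forall>k::nat. \<exists>B. norm (B - A) < 1 / Suc k \<and> rank B = rank A \<and> real (Suc k) < norm (pinv B)"
  proof
    fix k :: nat
    have d: "(1::real) / Suc k > 0" by simp
    show "\<exists>B. norm (B - A) < 1 / Suc k \<and> rank B = rank A \<and> real (Suc k) < norm (pinv B)"
    proof (rule ccontr)
      assume "\<not> ?thesis"
      then have "\<forall>B. norm (B - A) < 1 / Suc k \<longrightarrow> rank B = rank A \<longrightarrow> norm (pinv B) \<le> real (Suc k)"
        by (auto simp: not_less)
      with d H show False by blast
    qed
  qed
  then obtain Bs where Bs: "\<And>k. norm (Bs k - A) < 1 / Suc k" "\<And>k. rank (Bs k) = rank A"
      "\<And>k. real (Suc k) < norm (pinv (Bs k))"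
    by metis
  define X where "X k = pinv (Bs k)" for k
  define s where "s k = norm (X k)" for k
  have sgt: "real (Suc k) < s k" for k using Bs(3) by (simp add: s_def X_def)
  then have spos: "s k > 0" for k by (metis of_nat_0_less_iff zero_less_Suc order.strict_trans)
  define C where "C k = (1 / s k) *\<^sub>R X k" for k
  define P where "P k = Bs k ** X k" for k
  define Q where "Q k = X k ** Bs k" for k
  have normC: "norm (C k) = 1" for k
    using spos[of k] by (simp add: C_def s_def)
  have PP: "P k ** P k = P k" for k
    unfolding P_def X_def by (metis matrix_mul_assoc pinv1)
  have QQ: "Q k ** Q k = Q k" for k
    unfolding Q_def X_def by (metis matrix_mul_assoc pinv2)
  have PT: "transpose (P k) = P k" for k unfolding P_def X_def by (rule pinv3)
  have QT: "transpose (Q k) = Q k" for k unfolding Q_def X_def by (rule pinv4)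
  define Rm where "Rm = real (CARD('m) * CARD('m))"
  define Rn where "Rn = real (CARD('n) * CARD('n))"
  let ?S = "cball (0::real^'m^'n) 1 \<times> cball (0::real^'m^'m) Rm \<times> cball (0::real^'n^'n) Rn"
  have inS: "\<forall>k. (C k, P k, Q k) \<in> ?S"
    using normC sym_idem_norm[OF PT PP] sym_idem_norm[OF QT QQ] by (simp add: Rm_def Rn_def)
  have cS: "compact ?S" by (intro compact_Times compact_cball)
  obtain l r where l: "l \<in> ?S" and r: "strict_mono r" and lim: "((\<lambda>k. (C k, P k, Q k)) \<circ> r) \<longlonglongrightarrow> l"
    by (rule seq_compactE[OF compact_imp_seq_compact[OF cS] inS])
  obtain C0 P0 Q0 where l0: "l = (C0, P0, Q0)" by (cases l) auto
  have tC: "(\<lambda>k. C (r k)) \<longlonglongrightarrow> C0" using tendsto_fst[OF lim] l0 by (simp add: o_def)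
  have tP: "(\<lambda>k. P (r k)) \<longlonglongrightarrow> P0" using tendsto_fst[OF tendsto_snd[OF lim]] l0 by (simp add: o_def)
  have tQ: "(\<lambda>k. Q (r k)) \<longlonglongrightarrow> Q0" using tendsto_snd[OF tendsto_snd[OF lim]] l0 by (simp add: o_def)
  have inv0: "(\<lambda>k. inverse (real (Suc k))) \<longlonglongrightarrow> 0" by (rule LIMSEQ_inverse_real_of_nat)
  have nb: "(\<lambda>k. norm (Bs k - A)) \<longlonglongrightarrow> 0"
  proof (rule real_tendsto_sandwich[OF _ _ tendsto_const inv0])
    show "\<forall>\<^sub>F k in sequentially. 0 \<le> norm (Bs k - A)" by simp
    show "\<forall>\<^sub>F k in sequentially. norm (Bs k - A) \<le> inverse (real (Suc k))"
      using Bs(1) by (simp add: less_imp_le divide_inverse)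
  qed
  have tB0: "Bs \<longlonglongrightarrow> A" by (rule LIM_zero_cancel[OF tendsto_norm_zero_cancel[OF nb]])
  have tB: "(\<lambda>k. Bs (r k)) \<longlonglongrightarrow> A" using LIMSEQ_subseq_LIMSEQ[OF tB0 r] by (simp add: o_def)
  have ts0: "(\<lambda>k. 1 / s k) \<longlonglongrightarrow> 0"
  proof (rule real_tendsto_sandwich[OF _ _ tendsto_const inv0])
    show "\<forall>\<^sub>F k in sequentially. 0 \<le> 1 / s k" using spos by (simp add: less_imp_le)
    show "\<forall>\<^sub>F k in sequentially. 1 / s k \<le> inverse (real (Suc k))"
    proof (intro always_eventually allI)
      fix k
      have "inverse (s k) \<le> inverse (real (Suc k))"
        by (rule le_imp_inverse_le) (use sgt[of k] in auto)
      then show "1 / s k \<le> inverse (real (Suc k))" by (simp add: divide_inverse)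
    qed
  qed
  have ts: "(\<lambda>k. 1 / s (r k)) \<longlonglongrightarrow> 0" using LIMSEQ_subseq_LIMSEQ[OF ts0 r] by (simp add: o_def)
  have e1: "Bs k ** C k ** Bs k = (1 / s k) *\<^sub>R Bs k" for k
    by (simp add: C_def X_def pinv1)
  have ACA: "A ** C0 ** A = 0"
  proof (rule LIMSEQ_unique)
    show "(\<lambda>k. Bs (r k) ** C (r k) ** Bs (r k)) \<longlonglongrightarrow> A ** C0 ** A"
      by (intro tendsto_mm tB tC)
    show "(\<lambda>k. Bs (r k) ** C (r k) ** Bs (r k)) \<longlonglongrightarrow> 0"
      unfolding e1 using tendsto_scaleR[OF ts tB] by simp
  qed
  have e3: "C k ** P k = C k" for k
    unfolding C_def P_def X_def by (metis matrix_mul_assoc mm_scaleR_left pinv2)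
  have CP: "C0 ** P0 = C0"
  proof (rule LIMSEQ_unique)
    show "(\<lambda>k. C (r k) ** P (r k)) \<longlonglongrightarrow> C0 ** P0" by (intro tendsto_mm tC tP)
    show "(\<lambda>k. C (r k) ** P (r k)) \<longlonglongrightarrow> C0" unfolding e3 by (rule tC)
  qed
  have e4: "Q k ** C k = C k" for k
    unfolding C_def Q_def X_def by (metis matrix_mul_assoc mm_scaleR_right pinv2)
  have QC: "Q0 ** C0 = C0"
  proof (rule LIMSEQ_unique)
    show "(\<lambda>k. Q (r k) ** C (r k)) \<longlonglongrightarrow> Q0 ** C0" by (intro tendsto_mm tC tQ)
    show "(\<lambda>k. Q (r k) ** C (r k)) \<longlonglongrightarrow> C0" unfolding e4 by (rule tC)
  qed
  have e5: "P k ** Bs k = Bs k" for k by (simp add: P_def X_def pinv1)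
  have PA: "P0 ** A = A"
  proof (rule LIMSEQ_unique)
    show "(\<lambda>k. P (r k) ** Bs (r k)) \<longlonglongrightarrow> P0 ** A" by (intro tendsto_mm tB tP)
    show "(\<lambda>k. P (r k) ** Bs (r k)) \<longlonglongrightarrow> A" unfolding e5 by (rule tB)
  qed
  have e6: "Bs k ** Q k = Bs k" for k by (simp add: Q_def X_def matrix_mul_assoc pinv1)
  have AQ: "A ** Q0 = A"
  proof (rule LIMSEQ_unique)
    show "(\<lambda>k. Bs (r k) ** Q (r k)) \<longlonglongrightarrow> A ** Q0" by (intro tendsto_mm tB tQ)
    show "(\<lambda>k. Bs (r k) ** Q (r k)) \<longlonglongrightarrow> A" unfolding e6 by (rule tB)
  qed
  have P0P0: "P0 ** P0 = P0"
    using LIMSEQ_unique[OF tendsto_mm[OF tP tP]] tP PP by simp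
  have Q0Q0: "Q0 ** Q0 = Q0"
    using LIMSEQ_unique[OF tendsto_mm[OF tQ tQ]] tQ QQ by simp
  have Q0T: "transpose Q0 = Q0"
    using LIMSEQ_unique[OF tendsto_transpose[OF tQ]] tQ QT by simp
  have rk: "rank P0 = rank A \<and> rank Q0 = rank A"
  proof -
    obtain N1 where N1: "\<And>k. k \<ge> N1 \<Longrightarrow> norm (P (r k) - P0) < 1"
      using LIMSEQ_D[OF tP, of 1] by auto
    obtain N2 where N2: "\<And>k. k \<ge> N2 \<Longrightarrow> norm (Q (r k) - Q0) < 1"
      using LIMSEQ_D[OF tQ, of 1] by auto
    have "rank P0 = rank (P (r N1))" using rank_eq_close_idem[OF PP P0P0 N1] by simp
    also have "\<dots> = rank A" by (simp add: P_def X_def rank_AX Bs(2))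
    finally have 1: "rank P0 = rank A" .
    have "rank Q0 = rank (Q (r N2))" using rank_eq_close_idem[OF QQ Q0Q0 N2] by simp
    also have "\<dots> = rank A" by (simp add: Q_def X_def rank_XA Bs(2))
    finally show ?thesis using 1 by simp
  qed
  have P0eq: "P0 = A ** (pinv A ** P0)" using proj_range_eq[OF PA] rk by simp
  have QAt: "Q0 ** transpose A = transpose A"
    using AQ Q0T by (metis matrix_transpose_mul)
  have Q0eq': "Q0 = transpose A ** (pinv (transpose A) ** Q0)"
    using proj_range_eq[OF QAt] rk by (simp add: rank_transpose)
  have Q0eq: "Q0 = (Q0 ** transpose (pinv (transpose A))) ** A"
    using arg_cong[OF Q0eq', of transpose] Q0T by (simp add: matrix_transpose_mul matrix_mul_assoc)
  have "C0 = Q0 ** C0 ** P0" using QC CP by simp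
  also have "\<dots> = (Q0 ** transpose (pinv (transpose A))) ** (A ** C0 ** A) ** (pinv A ** P0)"
    by (subst P0eq, subst Q0eq) (simp add: matrix_mul_assoc)
  also have "\<dots> = 0" by (simp add: ACA)
  finally have "C0 = 0" .
  moreover have "norm C0 = 1"
    using LIMSEQ_unique[OF tendsto_norm[OF tC]] normC by simp
  ultimately show False by simp
qed


definition wedin :: "real^'n^'m \<Rightarrow> real^'m^'n \<Rightarrow> real^'n^'m \<Rightarrow> real^'m^'n \<Rightarrow> real^'n^'m \<Rightarrow> real^'m^'n" where
  "wedin B X A Y E = - (X ** E ** Y) + X ** transpose X ** transpose E ** (mat 1 - A ** Y)
       + (mat 1 - X ** B) ** transpose E ** transpose Y ** Y"

lemmas mmsimps = mm_diff_rdistrib mm_diff_ldistrib matrix_add_ldistrib mm_add_rdistrib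
  matrix_mul_assoc mm_minus_left mm_minus_right transpose_diff transpose_add transpose_minus matrix_transpose_mul

lemma wedin_identity: "pinv B - pinv A = wedin B (pinv B) A (pinv A) (B - A)"
proof -
  let ?X = "pinv B" and ?Y = "pinv A"
  have T1: "?X - ?Y = - (?X ** (B - A) ** ?Y) + ?X ** (mat 1 - A ** ?Y) - (mat 1 - ?X ** B) ** ?Y"
    by (simp add: mmsimps algebra_simps)
  have X1: "?X = ?X ** transpose ?X ** transpose B"
    by (metis pinv2 pinv3 matrix_transpose_mul matrix_mul_assoc)
  have AT0: "transpose A ** (mat 1 - A ** ?Y) = 0"
  proof -
    have "transpose A ** (A ** ?Y) = transpose A"
      by (metis pinv1 pinv3 matrix_transpose_mul matrix_mul_assoc)
    then show ?thesis by (simp add: mm_diff_ldistrib)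
  qed
  have T2: "?X ** (mat 1 - A ** ?Y) = ?X ** transpose ?X ** transpose (B - A) ** (mat 1 - A ** ?Y)"
  proof -
    have "?X ** (mat 1 - A ** ?Y) = ?X ** transpose ?X ** (transpose B ** (mat 1 - A ** ?Y))"
      by (subst X1) (simp add: matrix_mul_assoc)
    also have "transpose B ** (mat 1 - A ** ?Y) = transpose (B - A) ** (mat 1 - A ** ?Y)"
      using AT0 by (simp add: transpose_diff mm_diff_rdistrib)
    finally show ?thesis by (simp add: matrix_mul_assoc)
  qed
  have Y1: "?Y = transpose A ** transpose ?Y ** ?Y"
    by (metis pinv2 pinv4 matrix_transpose_mul matrix_mul_assoc)
  have BT0: "(mat 1 - ?X ** B) ** transpose B = 0"
  proof -
    have "?X ** B ** transpose B = transpose B"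
      by (metis pinv1 pinv4 matrix_transpose_mul matrix_mul_assoc)
    then show ?thesis by (simp add: mm_diff_rdistrib)
  qed
  have T3: "(mat 1 - ?X ** B) ** ?Y = - ((mat 1 - ?X ** B) ** transpose (B - A) ** transpose ?Y ** ?Y)"
  proof -
    have "(mat 1 - ?X ** B) ** ?Y = ((mat 1 - ?X ** B) ** transpose A) ** transpose ?Y ** ?Y"
      by (subst Y1) (simp add: matrix_mul_assoc)
    also have "(mat 1 - ?X ** B) ** transpose A = - ((mat 1 - ?X ** B) ** transpose (B - A))"
      using BT0 by (simp add: transpose_diff mm_diff_ldistrib)
    finally show ?thesis by (simp add: mm_minus_left)
  qed
  show ?thesis unfolding wedin_def using T1 T2 T3 by simp
qed

lemma norm_mm3: "norm ((P::real^'a^'b) ** (Q::real^'c^'a) ** (R::real^'d^'c)) \<le> norm P * norm Q * norm R"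
proof -
  have "norm (P ** Q ** R) \<le> norm (P ** Q) * norm R" by (rule norm_mm)
  also have "\<dots> \<le> norm P * norm Q * norm R" by (rule mult_right_mono[OF norm_mm norm_ge_zero])
  finally show ?thesis .
qed

lemma norm_mm4: "norm ((P::real^'a^'b) ** (Q::real^'c^'a) ** (R::real^'d^'c) ** (S::real^'e^'d)) \<le> norm P * norm Q * norm R * norm S"
proof -
  have "norm (P ** Q ** R ** S) \<le> norm (P ** Q ** R) * norm S" by (rule norm_mm)
  also have "\<dots> \<le> norm P * norm Q * norm R * norm S" by (rule mult_right_mono[OF norm_mm3 norm_ge_zero])
  finally show ?thesis .
qed

lemma norm_idm: "norm ((mat 1 :: real^'a^'a) - (P::real^'b^'a) ** (Q::real^'a^'b)) \<le> norm (mat 1 :: real^'a^'a) + norm P * norm Q"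
proof -
  have "norm ((mat 1 :: real^'a^'a) - P ** Q) \<le> norm (mat 1 :: real^'a^'a) + norm (P ** Q)" by (rule norm_triangle_ineq4)
  also have "\<dots> \<le> norm (mat 1 :: real^'a^'a) + norm P * norm Q" by (rule add_left_mono[OF norm_mm])
  finally show ?thesis .
qed

lemma norm_wedin:
  "norm (wedin B X A Y E) \<le> (norm X * norm Y + norm X * norm X * (norm (mat 1 :: real^'m^'m) + norm A * norm Y)
      + (norm (mat 1 :: real^'n^'n) + norm X * norm B) * norm Y * norm Y) * norm E"
  for B :: "real^'n^'m"
proof -
  let ?a = "X ** E ** Y" and ?b = "X ** transpose X ** transpose E ** (mat 1 - A ** Y)"
    and ?c = "(mat 1 - X ** B) ** transpose E ** transpose Y ** Y"
  have a: "norm ?a \<le> norm X * norm E * norm Y" by (rule norm_mm3)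
  have b: "norm ?b \<le> norm X * norm X * norm E * (norm (mat 1 :: real^'m^'m) + norm A * norm Y)"
  proof -
    have "norm ?b \<le> norm X * norm (transpose X) * norm (transpose E) * norm (mat 1 - A ** Y)" by (rule norm_mm4)
    also have "\<dots> \<le> norm X * norm X * norm E * (norm (mat 1 :: real^'m^'m) + norm A * norm Y)"
      unfolding norm_transpose by (rule mult_left_mono[OF norm_idm]) simp
    finally show ?thesis .
  qed
  have c: "norm ?c \<le> (norm (mat 1 :: real^'n^'n) + norm X * norm B) * norm E * norm Y * norm Y"
  proof -
    have "norm ?c \<le> norm (mat 1 - X ** B) * norm (transpose E) * norm (transpose Y) * norm Y" by (rule norm_mm4)
    also have "\<dots> \<le> (norm (mat 1 :: real^'n^'n) + norm X * norm B) * norm E * norm Y * norm Y"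
      unfolding norm_transpose mult.assoc by (rule mult_right_mono[OF norm_idm]) simp
    finally show ?thesis .
  qed
  have "norm (wedin B X A Y E) = norm (- ?a + ?b + ?c)" unfolding wedin_def ..
  also have "\<dots> \<le> norm (- ?a + ?b) + norm ?c" by (rule norm_triangle_ineq)
  also have "\<dots> \<le> norm ?a + norm ?b + norm ?c"
    using norm_triangle_ineq[of "- ?a" ?b] by simp
  also have "\<dots> \<le> norm X * norm E * norm Y + norm X * norm X * norm E * (norm (mat 1 :: real^'m^'m) + norm A * norm Y)
      + (norm (mat 1 :: real^'n^'n) + norm X * norm B) * norm E * norm Y * norm Y"
    using a b c by linarith
  also have "\<dots> = (norm X * norm Y + norm X * norm X * (norm (mat 1 :: real^'m^'m) + norm A * norm Y)
      + (norm (mat 1 :: real^'n^'n) + norm X * norm B) * norm Y * norm Y) * norm E"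
    by (simp add: algebra_simps)
  finally show ?thesis .
qed


lemma coef_mono:
  fixes x y b1 b2 M a n1 n2 :: real
  assumes "0\<le>x" "x\<le>M" "0\<le>y" "y\<le>M" "0\<le>b1" "b1\<le>a" "0\<le>b2" "b2\<le>a" "0\<le>n1" "0\<le>n2"
  shows "x*y + x*x*(n1 + b2*y) + (n2 + x*b1)*y*y \<le> M*M + M*M*(n1 + a*M) + (n2 + M*a)*M*M"
proof -
  have M: "0 \<le> M" "0 \<le> a" using assms by linarith+
  show ?thesis
    using assms M by (intro add_mono mult_mono) (auto intro!: mult_nonneg_nonneg add_nonneg_nonneg)
qed

lemma pinv_lipschitz_near:
  fixes A :: "real^'n^'m"
  shows "\<exists>\<delta>>0. \<exists>K\<ge>0. \<forall>B1 B2. norm (B1 - A) < \<delta> \<longrightarrow> norm (B2 - A) < \<delta> \<longrightarrow> rank B1 = rank A \<longrightarrow> rank B2 = rank A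
           \<longrightarrow> norm (pinv B1 - pinv B2) \<le> K * norm (B1 - B2)"
proof -
  obtain \<delta> M where d: "\<delta> > 0" and M: "\<And>B. norm (B - A) < \<delta> \<Longrightarrow> rank B = rank A \<Longrightarrow> norm (pinv B) \<le> M"
    using pinv_bounded_near[of A] by blast
  have "norm (pinv A) \<le> M" using M[of A] d by simp
  then have M0: "0 \<le> M" by (meson norm_ge_zero order_trans)
  define a where "a = norm A + \<delta>"
  define n1 where "n1 = norm (mat 1 :: real^'m^'m)"
  define n2 where "n2 = norm (mat 1 :: real^'n^'n)"
  define K where "K = M*M + M*M*(n1 + a*M) + (n2 + M*a)*M*M"
  have K0: "K \<ge> 0" unfolding K_def a_def n1_def n2_def using M0 d by (intro add_nonneg_nonneg mult_nonneg_nonneg) auto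
  have "\<forall>B1 B2. norm (B1 - A) < \<delta> \<longrightarrow> norm (B2 - A) < \<delta> \<longrightarrow> rank B1 = rank A \<longrightarrow> rank B2 = rank A
           \<longrightarrow> norm (pinv B1 - pinv B2) \<le> K * norm (B1 - B2)"
  proof (intro allI impI)
    fix B1 B2 :: "real^'n^'m"
    assume h: "norm (B1 - A) < \<delta>" "norm (B2 - A) < \<delta>" "rank B1 = rank A" "rank B2 = rank A"
    have nb: "norm B \<le> a" if "norm (B - A) < \<delta>" for B :: "real^'n^'m"
      using that norm_triangle_ineq2[of B A] unfolding a_def by linarith
    have "norm (pinv B1 - pinv B2) = norm (wedin B1 (pinv B1) B2 (pinv B2) (B1 - B2))"
      by (simp add: wedin_identity)
    also have "\<dots> \<le> (norm (pinv B1) * norm (pinv B2) + norm (pinv B1) * norm (pinv B1) * (n1 + norm B2 * norm (pinv B2))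
      + (n2 + norm (pinv B1) * norm B1) * norm (pinv B2) * norm (pinv B2)) * norm (B1 - B2)"
      unfolding n1_def n2_def by (rule norm_wedin)
    also have "\<dots> \<le> K * norm (B1 - B2)"
      unfolding K_def
      by (rule mult_right_mono[OF coef_mono]) (use h M nb in \<open>auto simp: n1_def n2_def\<close>)
    finally show "norm (pinv B1 - pinv B2) \<le> K * norm (B1 - B2)" .
  qed
  then show ?thesis using d K0 by blast
qed

lemma eventually_close:
  assumes "(f \<longlongrightarrow> l) F" "e > 0" shows "eventually (\<lambda>x. norm (f x - l) < e) F"
  using assms tendsto_iff[of f l F] by (simp add: dist_norm)

lemma pinv_cont:
  fixes A :: "'a::t2_space \<Rightarrow> real^'n^'m"
  assumes c: "isCont A x0" and r: "eventually (\<lambda>x. rank (A x) = rank (A x0)) (at x0)"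
  shows "isCont (\<lambda>x. pinv (A x)) x0"
proof -
  obtain \<delta> K where d: "\<delta> > 0" and K: "\<And>B1 B2. norm (B1 - A x0) < \<delta> \<Longrightarrow> norm (B2 - A x0) < \<delta> \<Longrightarrow>
      rank B1 = rank (A x0) \<Longrightarrow> rank B2 = rank (A x0) \<Longrightarrow> norm (pinv B1 - pinv B2) \<le> K * norm (B1 - B2)"
    using pinv_lipschitz_near[of "A x0"] by blast
  have cl: "eventually (\<lambda>x. norm (A x - A x0) < \<delta>) (at x0)"
    using eventually_close[OF c[unfolded isCont_def] d] .
  have ev: "eventually (\<lambda>x. norm (pinv (A x) - pinv (A x0)) \<le> K * norm (A x - A x0)) (at x0)"
    using cl r by eventually_elim (rule K, auto simp: d)
  have "((\<lambda>x. K * norm (A x - A x0)) \<longlongrightarrow> K * 0) (at x0)"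
    by (intro tendsto_mult tendsto_const tendsto_norm_zero LIM_zero c[unfolded isCont_def])
  then have "((\<lambda>x. pinv (A x) - pinv (A x0)) \<longlongrightarrow> 0) (at x0)"
    using Lim_null_comparison[OF ev] by simp
  then show ?thesis unfolding isCont_def by (rule LIM_zero_cancel)
qed

lemma idem_AX: "A ** pinv A ** (A ** pinv A) = A ** pinv A"
  by (metis matrix_mul_assoc pinv1)

lemma rank_ev_of_cont:
  fixes A :: "'a::t2_space \<Rightarrow> real^'n^'m"
  assumes c: "isCont A x0" and p: "isCont (\<lambda>x. pinv (A x)) x0"
  shows "eventually (\<lambda>x. rank (A x) = rank (A x0)) (at x0)"
proof -
  have t: "((\<lambda>x. A x ** pinv (A x)) \<longlongrightarrow> A x0 ** pinv (A x0)) (at x0)"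
    using tendsto_mm[OF c[unfolded isCont_def] p[unfolded isCont_def]] .
  show ?thesis
    using eventually_close[OF t zero_less_one]
    by eventually_elim (metis rank_eq_close_idem idem_AX rank_AX)
qed

lemma nat_close: "\<bar>real a - real c\<bar> < 1 \<Longrightarrow> a = c"
proof (rule ccontr)
  assume h: "\<bar>real a - real c\<bar> < 1" "a \<noteq> c"
  then have "a + 1 \<le> c \<or> c + 1 \<le> a" by arith
  then have "real a + 1 \<le> real c \<or> real c + 1 \<le> real a" by (metis of_nat_1 of_nat_add of_nat_le_iff)
  with h(1) show False by (auto simp: abs_less_iff)
qed

lemma rank_tendsto_iff:
  "((\<lambda>x. real (f x)) \<longlongrightarrow> real c) F \<longleftrightarrow> eventually (\<lambda>x. f x = c) F"
proof
  assume "((\<lambda>x. real (f x)) \<longlongrightarrow> real c) F"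
  from eventually_close[OF this zero_less_one] show "eventually (\<lambda>x. f x = c) F"
    by eventually_elim (simp add: nat_close)
next
  assume "eventually (\<lambda>x. f x = c) F"
  then show "((\<lambda>x. real (f x)) \<longlongrightarrow> real c) F"
    by (rule tendsto_eventually[OF eventually_mono]) simp
qed


lemma has_derivative_bilin_cont:
  assumes b: "bounded_bilinear b" and e: "(e has_derivative e') (at x within s)" and e0: "e x = 0"
    and g: "(g \<longlongrightarrow> g x) (at x within s)"
  shows "((\<lambda>y. b (g y) (e y)) has_derivative (\<lambda>h. b (g x) (e' h))) (at x within s)"
proof -
  interpret b: bounded_bilinear b by fact
  obtain KE where KE: "\<And>h. norm (e' h) \<le> norm h * KE"
    using bounded_linear.bounded[OF has_derivative_bounded_linear[OF e]] by fast
  obtain K where K: "0 < K" "\<And>a c. norm (b a c) \<le> norm a * norm c * K" using b.pos_bounded by fast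
  define N where "N y = norm (e y - e x - e' (y - x)) / norm (y - x)" for y
  have N0: "(N \<longlongrightarrow> 0) (at x within s)" using e unfolding has_derivative_iff_norm by (simp add: N_def[abs_def])
  have gd: "((\<lambda>y. norm (g y - g x)) \<longlongrightarrow> 0) (at x within s)"
    using tendsto_norm_zero[OF LIM_zero[OF g]] .
  show ?thesis
  proof (rule has_derivativeI_sandwich[of 1])
    show "bounded_linear (\<lambda>h. b (g x) (e' h))"
      by (rule bounded_linear_compose[OF b.bounded_linear_right has_derivative_bounded_linear[OF e]])
    have "((\<lambda>y. norm (g x) * N y * K + norm (g y - g x) * (KE + N y) * K) \<longlongrightarrow>
          norm (g x) * 0 * K + 0 * (KE + 0) * K) (at x within s)"
      by (intro tendsto_intros N0 gd)
    then show "((\<lambda>y. norm (g x) * N y * K + norm (g y - g x) * (KE + N y) * K) \<longlongrightarrow> 0) (at x within s)"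
      by simp
  next
    fix y assume yx: "y \<noteq> x"
    let ?D = "e y - e x - e' (y - x)"
    have t: "norm (y - x) > 0" using yx by simp
    have eqn: "b (g y) (e y) - b (g x) (e x) - b (g x) (e' (y - x)) = b (g x) ?D + b (g y - g x) (e y)"
      using e0 by (simp add: b.diff_left b.diff_right b.zero_right algebra_simps)
    have 1: "norm (b (g y) (e y) - b (g x) (e x) - b (g x) (e' (y - x)))
        \<le> norm (g x) * norm ?D * K + norm (g y - g x) * norm (e y) * K"
      unfolding eqn by (rule order_trans[OF norm_triangle_ineq add_mono[OF K(2) K(2)]])
    have 2: "norm (e y) \<le> norm (y - x) * KE + norm ?D"
    proof -
      have "e y = e' (y - x) + ?D" using e0 by simp
      then have "norm (e y) \<le> norm (e' (y - x)) + norm ?D" by (metis norm_triangle_ineq)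
      then show ?thesis using KE[of "y - x"] by linarith
    qed
    have "norm (g x) * norm ?D * K + norm (g y - g x) * norm (e y) * K
        \<le> norm (g x) * norm ?D * K + norm (g y - g x) * (norm (y - x) * KE + norm ?D) * K"
      using 2 K(1) by (intro add_left_mono mult_right_mono mult_left_mono) auto
    with 1 have 3: "norm (b (g y) (e y) - b (g x) (e x) - b (g x) (e' (y - x)))
        \<le> norm (g x) * norm ?D * K + norm (g y - g x) * (norm (y - x) * KE + norm ?D) * K" by linarith
    have "norm (b (g y) (e y) - b (g x) (e x) - b (g x) (e' (y - x))) / norm (y - x)
        \<le> (norm (g x) * norm ?D * K + norm (g y - g x) * (norm (y - x) * KE + norm ?D) * K) / norm (y - x)"
      using 3 t by (rule divide_right_mono[OF _ less_imp_le])
    also have "\<dots> = norm (g x) * N y * K + norm (g y - g x) * (KE + N y) * K"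
      using t by (simp add: N_def field_simps)
    finally show "norm (b (g y) (e y) - b (g x) (e x) - b (g x) (e' (y - x))) / norm (y - x)
        \<le> norm (g x) * N y * K + norm (g y - g x) * (KE + N y) * K" .
  qed simp
qed


lemma deriv_term:
  assumes e: "(e has_derivative e') (at x)" and e0: "e x = 0" and g: "(g \<longlongrightarrow> g x) (at x)"
    and L: "bounded_linear L"
  shows "((\<lambda>y. (g y :: real^'n^'m) ** (L (e y) :: real^'p^'n)) has_derivative (\<lambda>h. g x ** L (e' h))) (at x)"
proof -
  have "((\<lambda>y. g y ** L (e y)) has_derivative (\<lambda>h. g x ** L (e' h))) (at x within UNIV)"
    by (rule has_derivative_bilin_cont[OF bb_mm bounded_linear.has_derivative[OF L e]])
       (use e0 g linear_0[OF bounded_linear.linear[OF L]] in auto)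
  then show ?thesis by simp
qed

lemma blL: "bounded_linear (\<lambda>E. (E::real^'n^'m) ** (C::real^'p^'n))"
  by (rule bounded_bilinear.bounded_linear_left[OF bb_mm])

lemma blLT: "bounded_linear (\<lambda>E. transpose (E::real^'n^'m) ** (C::real^'p^'m))"
  by (rule bounded_linear_compose[OF blL bl_transpose])

lemma pinv_has_derivative:
  fixes A :: "'a::real_normed_vector \<Rightarrow> real^'n^'m"
  assumes d: "(A has_derivative A') (at x)" and r: "eventually (\<lambda>y. rank (A y) = rank (A x)) (at x)"
  shows "((\<lambda>y. pinv (A y)) has_derivative (\<lambda>h. wedin (A x) (pinv (A x)) (A x) (pinv (A x)) (A' h))) (at x)"
proof -
  let ?Y0 = "pinv (A x)" and ?A0 = "A x"
  have cA: "isCont A x" using has_derivative_continuous[OF d] .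
  have cP: "isCont (\<lambda>y. pinv (A y)) x" by (rule pinv_cont[OF cA r])
  have tA: "(A \<longlongrightarrow> A x) (at x)" using cA by (simp add: isCont_def)
  have tP: "((\<lambda>y. pinv (A y)) \<longlongrightarrow> pinv (A x)) (at x)" using cP by (simp add: isCont_def)
  define e where "e y = A y - A x" for y
  have e: "(e has_derivative A') (at x)"
    unfolding e_def[abs_def] using has_derivative_diff[OF d has_derivative_const[of "A x"]] by simp
  have e0: "e x = 0" by (simp add: e_def)
  have D1: "((\<lambda>y. pinv (A y) ** (e y ** ?Y0)) has_derivative (\<lambda>h. pinv (A x) ** (A' h ** ?Y0))) (at x)"
    by (rule deriv_term[OF e e0 tP blL])
  have D2: "((\<lambda>y. (pinv (A y) ** transpose (pinv (A y))) ** (transpose (e y) ** (mat 1 - ?A0 ** ?Y0)))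
      has_derivative (\<lambda>h. (pinv (A x) ** transpose (pinv (A x))) ** (transpose (A' h) ** (mat 1 - ?A0 ** ?Y0)))) (at x)"
    by (rule deriv_term[OF e e0 tendsto_mm[OF tP tendsto_transpose[OF tP]] blLT])
  have D3: "((\<lambda>y. (mat 1 - pinv (A y) ** A y) ** (transpose (e y) ** (transpose ?Y0 ** ?Y0)))
      has_derivative (\<lambda>h. (mat 1 - pinv (A x) ** A x) ** (transpose (A' h) ** (transpose ?Y0 ** ?Y0)))) (at x)"
    by (rule deriv_term[OF e e0 tendsto_diff[OF tendsto_const tendsto_mm[OF tP tA]] blLT])
  have D: "((\<lambda>y. pinv (A x) + (- (pinv (A y) ** (e y ** ?Y0))
        + (pinv (A y) ** transpose (pinv (A y))) ** (transpose (e y) ** (mat 1 - ?A0 ** ?Y0))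
        + (mat 1 - pinv (A y) ** A y) ** (transpose (e y) ** (transpose ?Y0 ** ?Y0))))
      has_derivative (\<lambda>h. 0 + (- (pinv (A x) ** (A' h ** ?Y0))
        + (pinv (A x) ** transpose (pinv (A x))) ** (transpose (A' h) ** (mat 1 - ?A0 ** ?Y0))
        + (mat 1 - pinv (A x) ** A x) ** (transpose (A' h) ** (transpose ?Y0 ** ?Y0))))) (at x)"
    by (intro has_derivative_add has_derivative_const has_derivative_minus D1 D2 D3)
  have f: "(\<lambda>y. pinv (A x) + (- (pinv (A y) ** (e y ** ?Y0))
        + (pinv (A y) ** transpose (pinv (A y))) ** (transpose (e y) ** (mat 1 - ?A0 ** ?Y0))
        + (mat 1 - pinv (A y) ** A y) ** (transpose (e y) ** (transpose ?Y0 ** ?Y0)))) = (\<lambda>y. pinv (A y))"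
  proof
    fix y
    have "pinv (A y) = pinv (A x) + wedin (A y) (pinv (A y)) (A x) (pinv (A x)) (e y)"
      using wedin_identity[of "A y" "A x"] by (simp add: e_def algebra_simps)
    then show "pinv (A x) + (- (pinv (A y) ** (e y ** ?Y0))
        + (pinv (A y) ** transpose (pinv (A y))) ** (transpose (e y) ** (mat 1 - ?A0 ** ?Y0))
        + (mat 1 - pinv (A y) ** A y) ** (transpose (e y) ** (transpose ?Y0 ** ?Y0))) = pinv (A y)"
      by (simp add: wedin_def matrix_mul_assoc)
  qed
  have f': "(\<lambda>h. 0 + (- (pinv (A x) ** (A' h ** ?Y0))
        + (pinv (A x) ** transpose (pinv (A x))) ** (transpose (A' h) ** (mat 1 - ?A0 ** ?Y0))
        + (mat 1 - pinv (A x) ** A x) ** (transpose (A' h) ** (transpose ?Y0 ** ?Y0))))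
      = (\<lambda>h. wedin (A x) (pinv (A x)) (A x) (pinv (A x)) (A' h))"
    by (simp add: wedin_def matrix_mul_assoc)
  show ?thesis using D unfolding f f' .
qed


lemma reg_cont:
  fixes f :: "real^'d \<Rightarrow> real^'n^'m"
  assumes "regular_at c f x0" shows "isCont f x0"
proof (cases c)
  case Reg0 then show ?thesis using assms by simp
next
  case RegLp
  then obtain r L where r: "r > 0" and L: "\<forall>x\<in>cball x0 r. norm (f x - f x0) \<le> L * norm (x - x0)"
    using assms by (auto simp: ptwise_lipschitz_at_def)
  have ev: "eventually (\<lambda>x. norm (f x - f x0) \<le> L * norm (x - x0)) (at x0)"
    unfolding eventually_at using r L by (auto simp: dist_commute intro!: exI[of _ r])
  have "((\<lambda>x. L * norm (x - x0)) \<longlongrightarrow> L * norm (x0 - x0)) (at x0)"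
    by (intro tendsto_intros)
  then have "((\<lambda>x. f x - f x0) \<longlongrightarrow> 0) (at x0)" using Lim_null_comparison[OF ev] by simp
  then show ?thesis unfolding isCont_def by (rule LIM_zero_cancel)
next
  case RegL
  then obtain r L where r: "r > 0" and L: "L-lipschitz_on (ball x0 r) f"
    using assms by (auto simp: locally_lipschitz_at_def)
  have "\<forall>x\<in>ball x0 r. isCont f x"
    using lipschitz_on_continuous_on[OF L] by (simp add: continuous_on_eq_continuous_at[OF open_ball])
  then show ?thesis using r by simp
next
  case Reg1p
  then obtain D where "(f has_derivative D) (at x0)" using assms by (auto simp: differentiable_def)
  then show ?thesis using has_derivative_continuous by blast
next
  case Reg1
  then obtain r f' where "r > 0" "\<forall>x\<in>ball x0 r. (f has_derivative blinfun_apply (f' x)) (at x)"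
    using assms by (auto simp: C1_at_def)
  then have "(f has_derivative blinfun_apply (f' x0)) (at x0)" by simp
  then show ?thesis using has_derivative_continuous by blast
qed

lemma near_ball:
  fixes A :: "real^'d \<Rightarrow> real^'n^'m"
  assumes c: "isCont A x0" and ev: "eventually (\<lambda>x. rank (A x) = rank (A x0)) (at x0)" and d: "\<delta> > 0"
  shows "\<exists>r>0. \<forall>x\<in>ball x0 r. norm (A x - A x0) < \<delta> \<and> rank (A x) = rank (A x0)"
proof -
  have "eventually (\<lambda>x. norm (A x - A x0) < \<delta> \<and> rank (A x) = rank (A x0)) (at x0)"
    using eventually_close[OF c[unfolded isCont_def] d] ev by eventually_elim auto
  then obtain r where r: "r > 0" "\<And>x. x \<noteq> x0 \<Longrightarrow> dist x x0 < r \<Longrightarrow> norm (A x - A x0) < \<delta> \<and> rank (A x) = rank (A x0)"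
    unfolding eventually_at by auto
  have P: "norm (A x - A x0) < \<delta> \<and> rank (A x) = rank (A x0)" if x: "x \<in> ball x0 r" for x
  proof (cases "x = x0")
    case True then show ?thesis using d by simp
  next
    case False
    have "dist x x0 < r" using x by (simp add: dist_commute)
    then show ?thesis using r(2)[OF False] by blast
  qed
  show ?thesis using r(1) P by blast
qed

lemma bl_wedin: "bounded_linear (wedin B X A Y)"
proof -
  have "linear (wedin B X A Y)"
    by (rule linearI) (simp_all add: wedin_def mmsimps transpose_scalar algebra_simps)
  then show ?thesis by (simp add: linear_conv_bounded_linear)
qed

lemma tendsto_wedin:
  assumes "(B \<longlongrightarrow> b) F" "(X \<longlongrightarrow> xx) F" "(A \<longlongrightarrow> a) F" "(Y \<longlongrightarrow> y) F" "(E \<longlongrightarrow> ee) F"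
  shows "((\<lambda>t. wedin (B t) (X t) (A t) (Y t) (E t)) \<longlongrightarrow> wedin b xx a y ee) F"
  unfolding wedin_def
  by (intro tendsto_add tendsto_minus tendsto_mm tendsto_transpose tendsto_diff tendsto_const assms)


theorem lemma4:
  fixes A :: "real^'d \<Rightarrow> real^'n^'m" and x0 :: "real^'d" and c :: regclass
  assumes "regular_at c A x0"
  shows "regular_at c (\<lambda>x. pinv (A x)) x0 \<longleftrightarrow>
           ((\<lambda>x. real (rank (A x))) \<longlongrightarrow> real (rank (A x0))) (at x0)"
proof -
  have cA: "isCont A x0" by (rule reg_cont[OF assms])
  have iff: "((\<lambda>x. real (rank (A x))) \<longlongrightarrow> real (rank (A x0))) (at x0) \<longleftrightarrow>
      eventually (\<lambda>x. rank (A x) = rank (A x0)) (at x0)"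
    by (rule rank_tendsto_iff)
  show ?thesis
  proof
    assume R: "regular_at c (\<lambda>x. pinv (A x)) x0"
    show "((\<lambda>x. real (rank (A x))) \<longlongrightarrow> real (rank (A x0))) (at x0)"
      unfolding iff by (rule rank_ev_of_cont[OF cA reg_cont[OF R]])
  next
    assume "((\<lambda>x. real (rank (A x))) \<longlongrightarrow> real (rank (A x0))) (at x0)"
    then have ev: "eventually (\<lambda>x. rank (A x) = rank (A x0)) (at x0)" unfolding iff .
    obtain \<delta> K where d: "\<delta> > 0" and K0: "K \<ge> 0" and K: "\<And>B1 B2. norm (B1 - A x0) < \<delta> \<Longrightarrow> norm (B2 - A x0) < \<delta> \<Longrightarrow>
        rank B1 = rank (A x0) \<Longrightarrow> rank B2 = rank (A x0) \<Longrightarrow> norm (pinv B1 - pinv B2) \<le> K * norm (B1 - B2)"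
      using pinv_lipschitz_near[of "A x0"] by blast
    obtain r1 where r1: "r1 > 0" and B: "\<And>x. x \<in> ball x0 r1 \<Longrightarrow> norm (A x - A x0) < \<delta> \<and> rank (A x) = rank (A x0)"
      using near_ball[OF cA ev d] by blast
    show "regular_at c (\<lambda>x. pinv (A x)) x0"
    proof (cases c)
      case Reg0 then show ?thesis using pinv_cont[OF cA ev] by simp
    next
      case RegLp
      then obtain r L where r: "r > 0" and L0: "L \<ge> 0" and L: "\<forall>x\<in>cball x0 r. norm (A x - A x0) \<le> L * norm (x - x0)"
        using assms by (auto simp: ptwise_lipschitz_at_def)
      define r' where "r' = min r (r1 / 2)"
      have r': "r' > 0" using r r1 by (simp add: r'_def)
      have "\<forall>x\<in>cball x0 r'. norm (pinv (A x) - pinv (A x0)) \<le> (K * L) * norm (x - x0)"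
      proof
        fix x assume x: "x \<in> cball x0 r'"
        then have x1: "x \<in> ball x0 r1" using r1 by (auto simp: r'_def)
        have x2: "x \<in> cball x0 r" using x by (auto simp: r'_def)
        have "norm (pinv (A x) - pinv (A x0)) \<le> K * norm (A x - A x0)"
          by (rule K) (use B[OF x1] d in auto)
        also have "\<dots> \<le> K * (L * norm (x - x0))" using L x2 K0 by (simp add: mult_left_mono)
        finally show "norm (pinv (A x) - pinv (A x0)) \<le> (K * L) * norm (x - x0)" by (simp add: mult.assoc)
      qed
      then have "ptwise_lipschitz_at (\<lambda>x. pinv (A x)) x0"
        unfolding ptwise_lipschitz_at_def using r' mult_nonneg_nonneg[OF K0 L0] by blast
      then show ?thesis using RegLp by simp
    next
      case RegL
      then obtain r L where r: "r > 0" and L: "L-lipschitz_on (ball x0 r) A"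
        using assms by (auto simp: locally_lipschitz_at_def)
      define r' where "r' = min r r1"
      have r': "r' > 0" using r r1 by (simp add: r'_def)
      have "(K * L)-lipschitz_on (ball x0 r') (\<lambda>x. pinv (A x))"
      proof (rule lipschitz_onI)
        show "0 \<le> K * L" using K0 lipschitz_on_nonneg[OF L] by simp
        fix x y assume x: "x \<in> ball x0 r'" and y: "y \<in> ball x0 r'"
        have x1: "x \<in> ball x0 r1" "x \<in> ball x0 r" and y1: "y \<in> ball x0 r1" "y \<in> ball x0 r"
          using x y by (auto simp: r'_def)
        have "dist (pinv (A x)) (pinv (A y)) \<le> K * norm (A x - A y)"
          unfolding dist_norm by (rule K) (use B[OF x1(1)] B[OF y1(1)] in auto)
        also have "\<dots> \<le> K * (L * dist x y)"
          using lipschitz_onD[OF L x1(2) y1(2)] K0 by (simp add: dist_norm mult_left_mono)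
        finally show "dist (pinv (A x)) (pinv (A y)) \<le> K * L * dist x y" by (simp add: mult.assoc)
      qed
      then have "locally_lipschitz_at (\<lambda>x. pinv (A x)) x0"
        unfolding locally_lipschitz_at_def using r' by blast
      then show ?thesis using RegL by simp
    next
      case Reg1p
      then obtain D where "(A has_derivative D) (at x0)" using assms by (auto simp: differentiable_def)
      from pinv_has_derivative[OF this ev] show ?thesis using Reg1p by (auto simp: differentiable_def)
    next
      case Reg1
      have "C1_at A x0" using assms Reg1 by simp
      then obtain r f' where r: "r > 0" and f': "\<forall>x\<in>ball x0 r. (A has_derivative blinfun_apply (f' x)) (at x)"
        and cf: "isCont f' x0"
        unfolding C1_at_def by blast
      define r' where "r' = min r r1"
      have r': "r' > 0" using r r1 by (simp add: r'_def)
      define g' where "g' x = Blinfun (\<lambda>h. wedin (A x) (pinv (A x)) (A x) (pinv (A x)) (blinfun_apply (f' x) h))" for x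
      have g'a: "blinfun_apply (g' x) = (\<lambda>h. wedin (A x) (pinv (A x)) (A x) (pinv (A x)) (blinfun_apply (f' x) h))" for x
        unfolding g'_def
        by (rule bounded_linear_Blinfun_apply[OF bounded_linear_compose[OF bl_wedin blinfun.bounded_linear_right]])
      have der: "((\<lambda>y. pinv (A y)) has_derivative blinfun_apply (g' x)) (at x)" if x: "x \<in> ball x0 r'" for x
      proof -
        have xr: "x \<in> ball x0 r" using x by (simp add: r'_def)
        have "eventually (\<lambda>y. y \<in> ball x0 r') (at x)"
          using x by (intro eventually_at_in_open') auto
        then have evx: "eventually (\<lambda>y. rank (A y) = rank (A x)) (at x)"
        proof (rule eventually_mono)
          fix y assume "y \<in> ball x0 r'"
          then have "y \<in> ball x0 r1" by (simp add: r'_def)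
          moreover have "x \<in> ball x0 r1" using x by (simp add: r'_def)
          ultimately show "rank (A y) = rank (A x)" using B by metis
        qed
        show ?thesis unfolding g'a using pinv_has_derivative[OF bspec[OF f' xr] evx] .
      qed
      have cg: "isCont g' x0"
      proof (rule continuous_blinfun_componentwiseI1)
        fix i :: "real^'d"
        have tf: "((\<lambda>x. blinfun_apply (f' x) i) \<longlongrightarrow> blinfun_apply (f' x0) i) (at x0)"
          using bounded_bilinear.tendsto[OF bounded_bilinear_blinfun_apply cf[unfolded isCont_def] tendsto_const] .
        have tA: "(A \<longlongrightarrow> A x0) (at x0)" using cA by (simp add: isCont_def)
        have tP: "((\<lambda>x. pinv (A x)) \<longlongrightarrow> pinv (A x0)) (at x0)" using pinv_cont[OF cA ev] by (simp add: isCont_def)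
        show "continuous (at x0) (\<lambda>x. blinfun_apply (g' x) i)"
          unfolding continuous_at g'a by (rule tendsto_wedin[OF tA tP tA tP tf])
      qed
      have "C1_at (\<lambda>x. pinv (A x)) x0" unfolding C1_at_def
        by (rule exI[of _ r'], rule conjI[OF r'], rule exI[of _ g'], intro conjI ballI der cg)
      then show ?thesis using Reg1 by simp
    qed
  qed
qed


end
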